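(* Let $p\ge4$. There is a constant $c_p>0$ such that the following holds. Let $n_1,\dots,n_p\in\mathbb{Z}\setminus\{0\}$ with $|n_1|\ge|n_2|\ge\cdots\ge|n_p|$ and set $n=n_1+\cdots+n_p$. Then at least one of the following is true: (I) (resonance) $n_i=n$ for some $1\le i\le p$; (II) $n_1+n_2=0$; (III) $|n_3|\ge c_p|n_1|$; (IV) $|\Phi_p(n_1,\dots,n_p)|=|n^5-n_1^5-\cdots-n_p^5|\ge c_p\,n_1^4$; (V) $n_3^4|n_4|\ge c_p\,n_1^4$.
   Context: $\Phi_p(n_1,\dots,n_p)=n^5-\sum_{i=1}^pn_i^5$ where $n=\sum_{i=1}^pn_i$. The paper writes (III)–(V) with $\gtrsim$, i.e. up to an implicit constant; condition (II) is written as $n_1^*+n_2^*=0$, meaning the two frequencies of largest absolute value sum to zero, which under the stated ordering is $n_1+n_2=0$. *)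

theory Defs
  imports Complex_Main
begin

text \<open>Frequencies n_1,...,n_p are given as a function nat => int on indices 1..p.\<close>

definition freq_sum :: "nat \<Rightarrow> (nat \<Rightarrow> int) \<Rightarrow> int" where
  "freq_sum p ns = (\<Sum>i=1..p. ns i)"

definition Phi :: "nat \<Rightarrow> (nat \<Rightarrow> int) \<Rightarrow> int" where
  "Phi p ns = (freq_sum p ns) ^ 5 - (\<Sum>i=1..p. (ns i) ^ 5)"

end

theory Submission imports Defs begin

lemma G_ident: "(a+b+R)^5 - a^5 - b^5 - R^5 = 5*(a+b)*(b+R)*(R+a)*(a^2+b^2+R^2+a*b+b*R+R*a)"
  for a b R :: real by algebra

lemma G_bound:
  fixes a b R :: real
  assumes R: "\<bar>R\<bar> \<le> \<bar>a\<bar>/2" and ab: "\<bar>a+b\<bar> \<ge> 1" and bR: "\<bar>b+R\<bar> \<ge> 1"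
  shows "\<bar>(a+b+R)^5 - a^5 - b^5 - R^5\<bar> \<ge> 5/64 * a^4"
proof -
  have aR: "\<bar>R+a\<bar> \<ge> \<bar>a\<bar>/2" using R by linarith
  have Q: "a^2+b^2+R^2+a*b+b*R+R*a = ((a+b)^2+(b+R)^2+(R+a)^2)/2" by (simp add: power2_eq_square field_simps)
  have "(\<bar>a\<bar>/2)^2 \<le> \<bar>R+a\<bar>^2" by (rule power_mono[OF aR]) simp
  then have sq: "(R+a)^2 \<ge> (\<bar>a\<bar>/2)^2" by simp
  have "(\<bar>a\<bar>/2)^2 = a^2/4" by (simp add: power_divide)
  then have Qge: "a^2+b^2+R^2+a*b+b*R+R*a \<ge> a^2/8"
    unfolding Q using sq zero_le_power2[of "a+b"] zero_le_power2[of "b+R"] by argo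
  have P: "\<bar>a+b\<bar> * \<bar>b+R\<bar> \<ge> \<bar>a\<bar>/4"
  proof (cases "\<bar>a+b\<bar> \<ge> \<bar>a\<bar>/4")
    case True
    have "\<bar>a+b\<bar> * 1 \<le> \<bar>a+b\<bar> * \<bar>b+R\<bar>" using bR by (intro mult_left_mono) auto
    then show ?thesis using True by (metis mult.right_neutral order.trans)
  next
    case False
    then have h: "\<bar>b+R\<bar> \<ge> \<bar>a\<bar>/4" using R by linarith
    have "1 * \<bar>b+R\<bar> \<le> \<bar>a+b\<bar> * \<bar>b+R\<bar>" using ab by (intro mult_right_mono) auto
    then show ?thesis using h by (metis mult_1 order.trans)
  qed
  have a2: "a^2/8 \<ge> 0" by simp
  have a1: "\<bar>a\<bar>/2 \<ge> 0" "\<bar>a\<bar>/4 \<ge> 0" by simp_all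
  have "(\<bar>a\<bar>/4)*(\<bar>a\<bar>/2) \<le> (\<bar>a+b\<bar>*\<bar>b+R\<bar>)*\<bar>R+a\<bar>"
    by (rule mult_mono[OF P aR]) simp_all
  then have "((\<bar>a\<bar>/4)*(\<bar>a\<bar>/2))*(a^2/8) \<le> ((\<bar>a+b\<bar>*\<bar>b+R\<bar>)*\<bar>R+a\<bar>)*(a^2+b^2+R^2+a*b+b*R+R*a)"
    by (rule mult_mono[OF _ Qge]) simp_all
  moreover have "\<bar>(a+b+R)^5 - a^5 - b^5 - R^5\<bar> = 5*(((\<bar>a+b\<bar>*\<bar>b+R\<bar>)*\<bar>R+a\<bar>)*(a^2+b^2+R^2+a*b+b*R+R*a))"
  proof -
    have "\<bar>(a+b+R)^5 - a^5 - b^5 - R^5\<bar> = 5*((\<bar>a+b\<bar>*\<bar>b+R\<bar>*\<bar>R+a\<bar>)*\<bar>a^2+b^2+R^2+a*b+b*R+R*a\<bar>)"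
      unfolding G_ident abs_mult by simp
    also have "\<bar>a^2+b^2+R^2+a*b+b*R+R*a\<bar> = a^2+b^2+R^2+a*b+b*R+R*a" using Qge a2 by linarith
    finally show ?thesis by (simp add: mult.assoc)
  qed
  moreover have "\<bar>a\<bar>*\<bar>a\<bar> = a^2" by (simp add: abs_mult_self_eq power2_eq_square)
  then have "5*(((\<bar>a\<bar>/4)*(\<bar>a\<bar>/2))*(a^2/8)) = 5/64 * a^4"
    by (simp add: power4_eq_xxxx power2_eq_square field_simps)
  ultimately show ?thesis by linarith
qed

lemma prod_bound:
  fixes x y B :: real
  assumes "\<bar>x\<bar> \<le> B" "\<bar>y\<bar> \<le> B"
  shows "\<bar>x^k * y^j\<bar> \<le> B^(k+j)"
proof -
  have "\<bar>x^k * y^j\<bar> = \<bar>x\<bar>^k * \<bar>y\<bar>^j" by (simp add: abs_mult power_abs)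
  also have "\<dots> \<le> B^k * B^j"
    using assms by (intro mult_mono power_mono) auto
  finally show ?thesis by (simp add: power_add)
qed

lemma E_bound:
  fixes t u R' S' m :: real
  assumes u: "\<bar>u\<bar> \<le> \<bar>t\<bar>" and R': "\<bar>R'\<bar> \<le> m*\<bar>u\<bar>" and S': "\<bar>S'\<bar> \<le> m*\<bar>u\<bar>^5" and m: "m \<ge> 0"
  shows "\<bar>(t+R')^5 - t^5 - S'\<bar> \<le> (5*(m+1)^4*m + m) * t^4 * \<bar>u\<bar>"
proof -
  define R where "R = t + R'"
  define B where "B = (m+1)*\<bar>t\<bar>"
  have mu: "m*\<bar>u\<bar> \<le> m*\<bar>t\<bar>" using u m by (rule mult_left_mono)
  have mt: "m*\<bar>t\<bar> \<ge> 0" using m by simp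
  have Bx: "B = m*\<bar>t\<bar> + \<bar>t\<bar>" unfolding B_def by (simp add: distrib_right)
  have Rb: "\<bar>R\<bar> \<le> B" unfolding R_def Bx using R' mu abs_triangle_ineq[of t R'] by linarith
  have tb: "\<bar>t\<bar> \<le> B" unfolding Bx using mt by linarith
  have id: "R^5 - t^5 = R' * (R^4*t^0 + R^3*t^1 + R^2*t^2 + R^1*t^3 + R^0*t^4)"
    unfolding R_def by algebra
  have p1: "\<bar>R^4*t^0\<bar> \<le> B^4" using prod_bound[OF Rb tb, of 4 0] by simp
  have p2: "\<bar>R^3*t^1\<bar> \<le> B^4" using prod_bound[OF Rb tb, of 3 1] by simp
  have p3: "\<bar>R^2*t^2\<bar> \<le> B^4" using prod_bound[OF Rb tb, of 2 2] by simp
  have p4: "\<bar>R^1*t^3\<bar> \<le> B^4" using prod_bound[OF Rb tb, of 1 3] by simp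
  have p5: "\<bar>R^0*t^4\<bar> \<le> B^4" using prod_bound[OF Rb tb, of 0 4] by simp
  have "\<bar>R^4*t^0 + R^3*t^1 + R^2*t^2 + R^1*t^3 + R^0*t^4\<bar> \<le> 5 * B^4"
    using p1 p2 p3 p4 p5 abs_triangle_ineq by (smt (verit))
  moreover have B4: "B^4 = (m+1)^4 * t^4" unfolding B_def by (simp add: power_mult_distrib power4_eq_xxxx)
  ultimately have "\<bar>R^5 - t^5\<bar> \<le> m*\<bar>u\<bar> * (5*(m+1)^4 * t^4)"
    unfolding id abs_mult using R' by (intro mult_mono) auto
  moreover have "\<bar>u\<bar>^5 \<le> t^4 * \<bar>u\<bar>"
  proof -
    have "\<bar>u\<bar>^4 \<le> \<bar>t\<bar>^4" using u by (intro power_mono) auto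
    then have "\<bar>u\<bar>^4 * \<bar>u\<bar> \<le> \<bar>t\<bar>^4 * \<bar>u\<bar>" by (intro mult_right_mono) auto
    moreover have "\<bar>u\<bar>^5 = \<bar>u\<bar>^4 * \<bar>u\<bar>" "\<bar>t\<bar>^4 = t^4"
      by algebra (simp add: power_abs)
    ultimately show ?thesis by simp
  qed
  then have "\<bar>S'\<bar> \<le> m * (t^4 * \<bar>u\<bar>)" using S' m mult_left_mono[of "\<bar>u\<bar>^5" "t^4 * \<bar>u\<bar>" m] by linarith
  moreover have "m*\<bar>u\<bar> * (5*(m+1)^4 * t^4) + m * (t^4 * \<bar>u\<bar>) = (5*(m+1)^4*m + m) * t^4 * \<bar>u\<bar>"
    by (simp add: algebra_simps)
  moreover have "\<bar>R^5 - t^5 - S'\<bar> \<le> \<bar>R^5 - t^5\<bar> + \<bar>S'\<bar>" by linarith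
  ultimately show ?thesis unfolding R_def by linarith
qed

lemma chain_mono:
  fixes ns :: "nat \<Rightarrow> int"
  assumes ch: "\<forall>i\<in>{1..<p}. \<bar>ns (i+1)\<bar> \<le> \<bar>ns i\<bar>" and j: "1 \<le> j" "j \<le> i" "i \<le> p"
  shows "\<bar>ns i\<bar> \<le> \<bar>ns j\<bar>"
  using j(2,3)
proof (induction i rule: dec_induct)
  case base then show ?case by simp
next
  case (step k)
  then have "\<bar>ns (k+1)\<bar> \<le> \<bar>ns k\<bar>" using ch j(1) by auto
  with step show ?case by simp
qed

lemma sum_split4:
  fixes f :: "nat \<Rightarrow> 'a::comm_monoid_add"
  assumes "p \<ge> 4"
  shows "(\<Sum>i=1..p. f i) = f 1 + f 2 + f 3 + (\<Sum>i=4..p. f i)"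
proof -
  have "(\<Sum>i=1..p. f i) = f 1 + (\<Sum>i=2..p. f i)" using assms
    by (subst sum.atLeast_Suc_atMost) (auto simp: numeral_2_eq_2)
  also have "(\<Sum>i=2..p. f i) = f 2 + (\<Sum>i=3..p. f i)" using assms
    by (subst sum.atLeast_Suc_atMost) (auto simp: numeral_3_eq_3 numeral_2_eq_2)
  also have "(\<Sum>i=3..p. f i) = f 3 + (\<Sum>i=4..p. f i)" using assms
    by (subst sum.atLeast_Suc_atMost) (auto simp: numeral_3_eq_3 eval_nat_numeral)
  finally show ?thesis by (simp add: add.assoc)
qed

lemma tail_bound:
  fixes ns :: "nat \<Rightarrow> int"
  assumes ch: "\<forall>i\<in>{1..<p}. \<bar>ns (i+1)\<bar> \<le> \<bar>ns i\<bar>" and p: "p \<ge> 4"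
  shows "\<bar>\<Sum>i=4..p. ns i\<bar> \<le> int (p-3) * \<bar>ns 4\<bar>"
    and "\<bar>\<Sum>i=4..p. ns i ^ 5\<bar> \<le> int (p-3) * \<bar>ns 4\<bar>^5"
proof -
  have le: "\<bar>ns i\<bar> \<le> \<bar>ns 4\<bar>" if "i \<in> {4..p}" for i
    using chain_mono[OF ch, of 4 i] that by auto
  have "\<bar>\<Sum>i=4..p. ns i\<bar> \<le> (\<Sum>i=4..p. \<bar>ns i\<bar>)" by (rule sum_abs)
  also have "\<dots> \<le> (\<Sum>i=4..p. \<bar>ns 4\<bar>)" using le by (intro sum_mono) auto
  also have "\<dots> = int (p-3) * \<bar>ns 4\<bar>" using p by simp
  finally show "\<bar>\<Sum>i=4..p. ns i\<bar> \<le> int (p-3) * \<bar>ns 4\<bar>" .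
  have "\<bar>\<Sum>i=4..p. ns i ^ 5\<bar> \<le> (\<Sum>i=4..p. \<bar>ns i ^ 5\<bar>)" by (rule sum_abs)
  also have "\<dots> \<le> (\<Sum>i=4..p. \<bar>ns 4\<bar>^5)" using le
  proof (intro sum_mono)
    fix i assume "i \<in> {4..p}"
    then have "\<bar>ns i\<bar>^5 \<le> \<bar>ns 4\<bar>^5" using le by (intro power_mono) auto
    then show "\<bar>ns i ^ 5\<bar> \<le> \<bar>ns 4\<bar>^5" by (simp add: power_abs)
  qed
  also have "\<dots> = int (p-3) * \<bar>ns 4\<bar>^5" using p by simp
  finally show "\<bar>\<Sum>i=4..p. ns i ^ 5\<bar> \<le> int (p-3) * \<bar>ns 4\<bar>^5" .
qed

theorem proposition3p2:
  fixes p :: nat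
  assumes "p \<ge> 4"
  shows "\<exists>c::real. c > 0 \<and>
    (\<forall>ns :: nat \<Rightarrow> int.
       (\<forall>i\<in>{1..p}. ns i \<noteq> 0) \<and> (\<forall>i\<in>{1..<p}. \<bar>ns (i+1)\<bar> \<le> \<bar>ns i\<bar>) \<longrightarrow>
         (\<exists>i\<in>{1..p}. ns i = freq_sum p ns)
       \<or> ns 1 + ns 2 = 0
       \<or> real_of_int \<bar>ns 3\<bar> \<ge> c * real_of_int \<bar>ns 1\<bar>
       \<or> real_of_int \<bar>Phi p ns\<bar> \<ge> c * real_of_int (ns 1 ^ 4)
       \<or> real_of_int (ns 3 ^ 4 * \<bar>ns 4\<bar>) \<ge> c * real_of_int (ns 1 ^ 4))"
proof -
  define P where "P = real p"
  have P4: "P \<ge> 4" using assms unfolding P_def by simp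
  define c where "c = 1 / (100 * P^5)"
  have P5: "P^5 \<ge> 4^5" using P4 by (intro power_mono) auto
  have cpos: "c > 0" unfolding c_def using P4 by simp
  have c_small: "c \<le> 1/102400" unfolding c_def using P4 P5 by (subst pos_divide_le_eq) auto
  have "P^1 \<le> P^5" using P4 by (intro power_increasing) auto
  then have PP5: "P \<le> P^5" by simp
  show ?thesis
  proof (intro exI[of _ c] conjI allI impI cpos)
    fix ns :: "nat \<Rightarrow> int"
    assume H: "(\<forall>i\<in>{1..p}. ns i \<noteq> 0) \<and> (\<forall>i\<in>{1..<p}. \<bar>ns (i+1)\<bar> \<le> \<bar>ns i\<bar>)"
    then have nz: "\<And>i. i \<in> {1..p} \<Longrightarrow> ns i \<noteq> 0" and ch: "\<forall>i\<in>{1..<p}. \<bar>ns (i+1)\<bar> \<le> \<bar>ns i\<bar>"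
      by auto
    show "(\<exists>i\<in>{1..p}. ns i = freq_sum p ns)
       \<or> ns 1 + ns 2 = 0
       \<or> real_of_int \<bar>ns 3\<bar> \<ge> c * real_of_int \<bar>ns 1\<bar>
       \<or> real_of_int \<bar>Phi p ns\<bar> \<ge> c * real_of_int (ns 1 ^ 4)
       \<or> real_of_int (ns 3 ^ 4 * \<bar>ns 4\<bar>) \<ge> c * real_of_int (ns 1 ^ 4)"
    proof (rule ccontr)
      assume N: "\<not> ?thesis"
      define Ri where "Ri = (\<Sum>i=4..p. ns i)"
      define Si where "Si = (\<Sum>i=4..p. ns i ^ 5)"
      have fs: "freq_sum p ns = ns 1 + ns 2 + ns 3 + Ri"
        unfolding freq_sum_def Ri_def using sum_split4[OF assms] .
      have s5: "(\<Sum>i=1..p. ns i ^ 5) = ns 1^5 + ns 2^5 + ns 3^5 + Si"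
        unfolding Si_def by (rule sum_split4[OF assms])
      have Phi_eq: "Phi p ns = (ns 1 + ns 2 + ns 3 + Ri)^5 - ns 1^5 - ns 2^5 - ns 3^5 - Si"
        unfolding Phi_def fs s5 by linarith
      have tb: "\<bar>Ri\<bar> \<le> int (p-3) * \<bar>ns 4\<bar>" "\<bar>Si\<bar> \<le> int (p-3) * \<bar>ns 4\<bar>^5"
        unfolding Ri_def Si_def using tail_bound[OF ch assms] by auto
      have n1: "ns 1 \<noteq> freq_sum p ns" using N assms by auto
      have n2: "ns 1 + ns 2 \<noteq> 0" using N by auto
      have n3: "real_of_int \<bar>ns 3\<bar> < c * real_of_int \<bar>ns 1\<bar>" using N by auto
      have n4: "real_of_int \<bar>Phi p ns\<bar> < c * real_of_int (ns 1 ^ 4)" using N by auto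
      have n5: "real_of_int (ns 3 ^ 4 * \<bar>ns 4\<bar>) < c * real_of_int (ns 1 ^ 4)" using N by auto
      have u3: "\<bar>ns 4\<bar> \<le> \<bar>ns 3\<bar>" using chain_mono[OF ch, of 3 4] assms by auto
      define a where "a = real_of_int (ns 1)"
      define b where "b = real_of_int (ns 2)"
      define t where "t = real_of_int (ns 3)"
      define u where "u = real_of_int (ns 4)"
      define R' where "R' = real_of_int Ri"
      define S' where "S' = real_of_int Si"
      define m where "m = P - 3"
      have m_eq: "real (p-3) = m" unfolding m_def P_def using assms by simp
      have m0: "m \<ge> 1" unfolding m_def using P4 by simp
      have ut: "\<bar>u\<bar> \<le> \<bar>t\<bar>" unfolding u_def t_def using u3 by linarith
      have "real_of_int \<bar>Ri\<bar> \<le> real_of_int (int (p-3) * \<bar>ns 4\<bar>)" using tb(1) by (simp only: of_int_le_iff)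
      then have R'b: "\<bar>R'\<bar> \<le> m * \<bar>u\<bar>" unfolding R'_def u_def m_eq[symmetric] by simp
      have "real_of_int \<bar>Si\<bar> \<le> real_of_int (int (p-3) * \<bar>ns 4\<bar>^5)" using tb(2) by (simp only: of_int_le_iff)
      then have S'b: "\<bar>S'\<bar> \<le> m * \<bar>u\<bar>^5" unfolding S'_def u_def m_eq[symmetric] by simp
      define R where "R = t + R'"
      have ab1: "\<bar>a + b\<bar> \<ge> 1" unfolding a_def b_def using n2 by linarith
      have bR1: "\<bar>b + R\<bar> \<ge> 1" unfolding b_def R_def t_def R'_def using n1 fs by linarith
      have a0: "a \<noteq> 0" unfolding a_def using nz[of 1] assms by auto
      have t_lt: "\<bar>t\<bar> < c * \<bar>a\<bar>" using n3 unfolding t_def a_def by simp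
      have V: "t^4 * \<bar>u\<bar> < c * a^4" using n5 unfolding t_def a_def u_def by simp
      have IV: "\<bar>(a+b+R)^5 - a^5 - b^5 - t^5 - S'\<bar> < c * a^4"
      proof -
        have PhiR: "real_of_int (Phi p ns) = (a+b+R)^5 - a^5 - b^5 - t^5 - S'"
          unfolding Phi_eq a_def b_def R_def t_def R'_def S'_def
          by (simp only: of_int_diff of_int_power of_int_add add.assoc)
        have "real_of_int \<bar>Phi p ns\<bar> = \<bar>(a+b+R)^5 - a^5 - b^5 - t^5 - S'\<bar>"
          by (simp only: of_int_abs PhiR)
        moreover have "real_of_int (ns 1 ^ 4) = a^4" by (simp only: a_def of_int_power)
        ultimately show ?thesis using n4 by simp
      qed
      have Rle: "\<bar>R\<bar> \<le> (m+1) * \<bar>t\<bar>"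
      proof -
        have "m*\<bar>u\<bar> \<le> m*\<bar>t\<bar>" using ut m0 by (intro mult_left_mono) auto
        then show ?thesis unfolding R_def using R'b abs_triangle_ineq[of t R'] by (simp add: distrib_right)
      qed
      have "(m+1) * \<bar>t\<bar> \<le> (m+1) * (c * \<bar>a\<bar>)" using t_lt m0 by (intro mult_left_mono) auto
      moreover have "(m+1) * c \<le> 1/2"
      proof -
        have "(m+1) * c = (P-2) / (100*P^5)" unfolding m_def c_def by simp
        also have "\<dots> \<le> 1/2" using P4 PP5 by (subst pos_divide_le_eq) auto
        finally show ?thesis .
      qed
      moreover have "(m+1) * (c * \<bar>a\<bar>) = ((m+1) * c) * \<bar>a\<bar>" by (simp only: mult.assoc)
      moreover have "((m+1) * c) * \<bar>a\<bar> \<le> (1/2) * \<bar>a\<bar>"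
        using \<open>(m+1) * c \<le> 1/2\<close> by (intro mult_right_mono) auto
      ultimately have Ra: "\<bar>R\<bar> \<le> \<bar>a\<bar>/2" using Rle by linarith
      have G: "\<bar>(a+b+R)^5 - a^5 - b^5 - R^5\<bar> \<ge> 5/64 * a^4" by (rule G_bound[OF Ra ab1 bR1])
      have E: "\<bar>R^5 - t^5 - S'\<bar> \<le> (5*(m+1)^4*m + m) * t^4 * \<bar>u\<bar>"
        unfolding R_def by (rule E_bound[OF ut R'b S'b]) (use m0 in simp)
      define K where "K = 5*(m+1)^4*m + m"
      have K0: "K \<ge> 0" unfolding K_def using m0 by simp
      have "(m+1)^4 \<le> P^4" unfolding m_def using P4 by (intro power_mono) auto
      moreover have "m \<le> P" unfolding m_def by simp
      ultimately have "5*(m+1)^4*m \<le> 5*P^4*P" using m0 by (intro mult_mono) auto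
      moreover have "m \<le> P^5" unfolding m_def using PP5 by simp
      moreover have "5*P^4*P = 5*P^5" by algebra
      ultimately have KP: "K \<le> 6 * P^5" unfolding K_def by linarith
      have Kc: "K * c \<le> 6/100"
      proof -
        have "K * c = K / (100*P^5)" unfolding c_def by simp
        also have "\<dots> \<le> 6/100" using KP P4 by (subst pos_divide_le_eq) auto
        finally show ?thesis .
      qed
      have "K * (t^4 * \<bar>u\<bar>) \<le> K * (c * a^4)" using V K0 by (intro mult_left_mono) auto
      also have "\<dots> = (K*c) * a^4" by simp
      also have "\<dots> \<le> 6/100 * a^4" using Kc by (intro mult_right_mono) auto
      finally have E2: "\<bar>R^5 - t^5 - S'\<bar> \<le> 6/100 * a^4" using E unfolding K_def by (simp add: mult.assoc)
      have "(a+b+R)^5 - a^5 - b^5 - t^5 - S' = ((a+b+R)^5 - a^5 - b^5 - R^5) + (R^5 - t^5 - S')" by simp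
      then have "\<bar>(a+b+R)^5 - a^5 - b^5 - t^5 - S'\<bar> \<ge> 5/64 * a^4 - 6/100 * a^4" using G E2 by linarith
      moreover have "c * a^4 \<le> 1/102400 * a^4" using c_small by (intro mult_right_mono) auto
      moreover have "a^4 > 0" using a0 by simp
      ultimately show False using IV by linarith
    qed
  qed
qed

end
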